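(* Let $\eta_w>0$, $\lambda\in[0,1]$, and let $\theta_1,\dots,\theta_T\in\Theta$ satisfy $\theta_{t+1}=\arg\min_{\theta\in\Theta}\{\eta_w\langle\tilde g_t,\theta-\theta_t\rangle+\frac12\|\theta-\theta_t\|_2^2\}$ with $\tilde g_t=\nabla\ell(\theta_t,z_t)$ for some samples $z_t\in\mathcal Z$. If $S$ is a $0.4\lambda$-dominant set at $\theta_t$ for some $t\in[T]$, then for any non-negative integer $\sigma'\le\min\{\lfloor\frac{0.1\lambda}{\eta_wG^2}\rfloor,T-t\}$, $S$ is also a $0.2\lambda$-dominant set at $\theta_{t+\sigma'}$.
   Context: $\Theta\subset\mathbb{R}^n$ is compact and convex; $\ell:\Theta\times\mathcal Z\to[0,1]$ is convex and $G$-Lipschitz in its first argument (so its (sub)gradients in $\theta$ have $\ell_2$-norm at most $G$); $\mathcal P_1,\dots,\mathcal P_K$ are distributions on $\mathcal Z$ and $R_i(\theta)=\mathbb E_{z\sim\mathcal P_i}\ell(\theta,z)$. For $\mu\ge0$, a nonempty $S\subseteq[K]$ is $\mu$-dominant at $\theta$ if $\min_{i\in S}R_i(\theta)\ge R_j(\theta)+\mu$ for all $j\in[K]\setminus S$. *)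

theory Defs
  imports "HOL-Probability.Probability"
begin

definition risk :: "(nat \<Rightarrow> 'z measure) \<Rightarrow> ('a \<Rightarrow> 'z \<Rightarrow> real) \<Rightarrow> nat \<Rightarrow> 'a \<Rightarrow> real" where
  "risk P loss i \<theta> = integral\<^sup>L (P i) (\<lambda>z. loss \<theta> z)"

definition dominant :: "(nat \<Rightarrow> 'a \<Rightarrow> real) \<Rightarrow> nat \<Rightarrow> real \<Rightarrow> nat set \<Rightarrow> 'a \<Rightarrow> bool" where
  "dominant R K \<mu> S \<theta> \<longleftrightarrow> S \<noteq> {} \<and> S \<subseteq> {1..K} \<and>
     (\<forall>j\<in>{1..K} - S. Min ((\<lambda>i. R i \<theta>) ` S) \<ge> R j \<theta> + \<mu>)"

definition is_subgradient :: "'a::real_inner set \<Rightarrow> ('a \<Rightarrow> real) \<Rightarrow> 'a \<Rightarrow> 'a \<Rightarrow> bool" where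
  "is_subgradient D f x g \<longleftrightarrow> (\<forall>y\<in>D. f y \<ge> f x + g \<bullet> (y - x))"

end

theory Submission
  imports Defs
begin

lemma int_le_shift:
  fixes f g :: "'z \<Rightarrow> real"
  assumes "prob_space M" "f \<in> borel_measurable M" "g \<in> borel_measurable M"
    "\<forall>z. 0 \<le> f z \<and> f z \<le> 1" "\<forall>z. 0 \<le> g z \<and> g z \<le> 1" "\<forall>z. f z \<le> g z + c"
  shows "integral\<^sup>L M f \<le> integral\<^sup>L M g + c"
proof -
  interpret prob_space M by fact
  have If: "integrable M f" using assms by (intro integrable_const_bound[where B=1]) auto
  have Ig: "integrable M g" using assms by (intro integrable_const_bound[where B=1]) auto
  have "integral\<^sup>L M f \<le> integral\<^sup>L M (\<lambda>z. g z + c)"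
    using If Ig assms(6) by (intro integral_mono) auto
  also have "\<dots> = integral\<^sup>L M g + c"
    using Ig by (simp add: Bochner_Integration.integral_add prob_space)
  finally show ?thesis .
qed

lemma step_bound:
  fixes x y g :: "'a::real_inner"
  assumes conv: "convex D" and xD: "x \<in> D" and yD: "y \<in> D"
    and am: "is_arg_min (\<lambda>\<theta>. e * (g \<bullet> (\<theta> - x)) + 1/2 * (norm (\<theta> - x))\<^sup>2) (\<lambda>\<theta>. \<theta> \<in> D) y"
    and e: "e \<ge> 0"
  shows "norm (y - x) \<le> e * norm g"
proof -
  define d where "d = y - x"
  define a where "a = e * (g \<bullet> d)"
  define b where "b = (norm d)\<^sup>2"
  have key: "- a \<ge> (1 - \<epsilon>/2) * b" if "0 < \<epsilon>" "\<epsilon> \<le> 1" for \<epsilon>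
  proof -
    have mem: "y + \<epsilon> *\<^sub>R (x - y) \<in> D"
    proof -
      have "(1-\<epsilon>) *\<^sub>R y + \<epsilon> *\<^sub>R x \<in> D"
        by (rule convexD[OF conv yD xD]) (use that in auto)
      moreover have "(1-\<epsilon>) *\<^sub>R y + \<epsilon> *\<^sub>R x = y + \<epsilon> *\<^sub>R (x - y)"
        by (simp add: algebra_simps)
      ultimately show ?thesis by simp
    qed
    have "e * (g \<bullet> d) + 1/2 * (norm d)\<^sup>2 \<le> e * (g \<bullet> ((y + \<epsilon> *\<^sub>R (x - y)) - x)) + 1/2 * (norm ((y + \<epsilon> *\<^sub>R (x - y)) - x))\<^sup>2"
      using am mem unfolding is_arg_min_def d_def by (simp add: not_less)
    also have "(y + \<epsilon> *\<^sub>R (x - y)) - x = (1 - \<epsilon>) *\<^sub>R d"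
      unfolding d_def by (simp add: algebra_simps)
    finally have "a + 1/2 * b \<le> (1 - \<epsilon>) * a + 1/2 * ((1-\<epsilon>)^2 * b)"
      unfolding a_def b_def by (simp add: power_mult_distrib abs_mult mult.left_commute)
    hence "\<epsilon> * (- a) \<ge> \<epsilon> * ((1 - \<epsilon>/2) * b)"
      by (simp add: power2_eq_square algebra_simps)
    thus ?thesis using that by (metis mult_le_cancel_left_pos mult_minus_right)
  qed
  have b0: "b \<ge> 0" unfolding b_def by simp
  have a1: "-a \<ge> b/2" using key[of 1] by simp
  have ab: "-a \<ge> b"
  proof (rule ccontr)
    assume "\<not> ?thesis"
    hence bp: "b > 0" "b + a > 0" using a1 b0 by auto
    define \<epsilon> where "\<epsilon> = (b + a) / b"
    have ep: "\<epsilon> > 0" "\<epsilon> \<le> 1" using bp a1 by (auto simp: \<epsilon>_def field_simps)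
    have eq: "(1 - \<epsilon>/2)*b = b - (b+a)/2" using bp by (simp add: \<epsilon>_def field_simps)
    from key[OF ep] have "-a \<ge> b - (b + a)/2" unfolding eq .
    hence "b \<le> -a" by (simp add: field_simps)
    thus False using bp by linarith
  qed
  have "-a \<le> e * norm g * norm d"
  proof -
    have "- (g \<bullet> d) \<le> norm g * norm d"
      by (metis Cauchy_Schwarz_ineq2 abs_le_iff)
    thus ?thesis unfolding a_def using e by (metis mult.assoc mult_left_mono mult_minus_right)
  qed
  hence "norm d * norm d \<le> (e * norm g) * norm d" using ab unfolding b_def
    by (simp add: power2_eq_square algebra_simps)
  thus ?thesis unfolding d_def
  proof (cases "norm d = 0")
    case True thus ?thesis using e unfolding d_def by simp
  next
    case False
    hence "norm d > 0" by simp
    thus ?thesis using \<open>norm d * norm d \<le> (e * norm g) * norm d\<close> unfolding d_def by simp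
  qed
qed

theorem lemmaC3:
  fixes \<Theta> :: "'a::euclidean_space set"
    and loss :: "'a \<Rightarrow> 'z \<Rightarrow> real"
    and grad :: "'a \<Rightarrow> 'z \<Rightarrow> 'a"
    and G :: real
    and K :: nat
    and P :: "nat \<Rightarrow> 'z measure"
    and \<eta>w lam :: real
    and T t \<sigma>' :: nat
    and \<theta>s :: "nat \<Rightarrow> 'a"
    and zs :: "nat \<Rightarrow> 'z"
    and S :: "nat set"
  assumes Theta_compact: "compact \<Theta>" and Theta_convex: "convex \<Theta>"
    and loss_range: "\<forall>\<theta>\<in>\<Theta>. \<forall>z. 0 \<le> loss \<theta> z \<and> loss \<theta> z \<le> 1"
    and loss_convex: "\<forall>z. convex_on \<Theta> (\<lambda>\<theta>. loss \<theta> z)"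
    and G_pos: "G > 0"
    and loss_lipschitz: "\<forall>z. G-lipschitz_on \<Theta> (\<lambda>\<theta>. loss \<theta> z)"
    and grad_subgrad: "\<forall>\<theta>\<in>\<Theta>. \<forall>z. is_subgradient \<Theta> (\<lambda>\<theta>'. loss \<theta>' z) \<theta> (grad \<theta> z)"
    and grad_bound: "\<forall>\<theta>\<in>\<Theta>. \<forall>z. norm (grad \<theta> z) \<le> G"
    and P_prob: "\<forall>i\<in>{1..K}. prob_space (P i)"
    and loss_meas: "\<forall>i\<in>{1..K}. \<forall>\<theta>\<in>\<Theta>. (\<lambda>z. loss \<theta> z) \<in> borel_measurable (P i)"
    and eta_pos: "\<eta>w > 0"
    and lambda_range: "0 \<le> lam" "lam \<le> 1"
    and iter_in: "\<forall>s\<in>{1..T}. \<theta>s s \<in> \<Theta>"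
    and iter_step: "\<forall>s\<in>{1..<T}. is_arg_min
        (\<lambda>\<theta>. \<eta>w * (grad (\<theta>s s) (zs s) \<bullet> (\<theta> - \<theta>s s)) + 1/2 * (norm (\<theta> - \<theta>s s))\<^sup>2)
        (\<lambda>\<theta>. \<theta> \<in> \<Theta>) (\<theta>s (Suc s))"
    and t_range: "1 \<le> t" "t \<le> T"
    and S_dom: "dominant (risk P loss) K (0.4 * lam) S (\<theta>s t)"
    and sigma_le1: "int \<sigma>' \<le> \<lfloor>0.1 * lam / (\<eta>w * G\<^sup>2)\<rfloor>"
    and sigma_le2: "\<sigma>' \<le> T - t"
  shows "dominant (risk P loss) K (0.2 * lam) S (\<theta>s (t + \<sigma>'))"
  proof -
  let ?R = "risk P loss"
  have memT: "\<theta>s s \<in> \<Theta>" if "t \<le> s" "s \<le> T" for s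
    using iter_in t_range that by auto
  have step: "norm (\<theta>s (Suc s) - \<theta>s s) \<le> \<eta>w * G" if "t \<le> s" "s < T" for s
  proof -
    have "norm (\<theta>s (Suc s) - \<theta>s s) \<le> \<eta>w * norm (grad (\<theta>s s) (zs s))"
      apply (rule step_bound[OF Theta_convex memT[of s] memT[of "Suc s"]])
      using that iter_step t_range eta_pos by auto
    also have "\<dots> \<le> \<eta>w * G"
      using grad_bound memT[of s] that eta_pos by (intro mult_left_mono) auto
    finally show ?thesis .
  qed
  have dist: "norm (\<theta>s (t + k) - \<theta>s t) \<le> real k * (\<eta>w * G)" if "k \<le> \<sigma>'" for k
    using that
  proof (induction k)
    case 0 thus ?case by simp
  next
    case (Suc k)
    have "norm (\<theta>s (t + Suc k) - \<theta>s t) \<le> norm (\<theta>s (Suc (t + k)) - \<theta>s (t + k)) + norm (\<theta>s (t + k) - \<theta>s t)"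
    proof -
      have "\<theta>s (t + Suc k) - \<theta>s t = (\<theta>s (Suc (t + k)) - \<theta>s (t + k)) + (\<theta>s (t + k) - \<theta>s t)" by simp
      thus ?thesis by (metis norm_triangle_ineq)
    qed
    also have "\<dots> \<le> \<eta>w * G + real k * (\<eta>w * G)"
      using Suc sigma_le2 t_range by (intro add_mono step Suc.IH) auto
    finally show ?case by (simp add: algebra_simps)
  qed
  have sig: "real \<sigma>' * (\<eta>w * G) * G \<le> 0.1 * lam"
  proof -
    have "real \<sigma>' \<le> 0.1 * lam / (\<eta>w * G\<^sup>2)"
    proof -
      have "real_of_int (int \<sigma>') \<le> real_of_int \<lfloor>0.1 * lam / (\<eta>w * G\<^sup>2)\<rfloor>"
        using sigma_le1 by (simp only: of_int_le_iff)
      hence "real \<sigma>' \<le> real_of_int \<lfloor>0.1 * lam / (\<eta>w * G\<^sup>2)\<rfloor>" by (simp only: of_int_of_nat_eq)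
      thus ?thesis using of_int_floor_le[of "0.1 * lam / (\<eta>w * G\<^sup>2)"] by (rule order_trans)
    qed
    hence "real \<sigma>' * (\<eta>w * G\<^sup>2) \<le> 0.1 * lam"
      using eta_pos G_pos by (simp add: field_simps)
    thus ?thesis by (simp add: power2_eq_square algebra_simps)
  qed
  define \<theta>1 where "\<theta>1 = \<theta>s t"
  define \<theta>2 where "\<theta>2 = \<theta>s (t + \<sigma>')"
  have m1: "\<theta>1 \<in> \<Theta>" "\<theta>2 \<in> \<Theta>" unfolding \<theta>1_def \<theta>2_def using memT sigma_le2 t_range by auto
  have dd: "G * norm (\<theta>2 - \<theta>1) \<le> 0.1 * lam"
  proof -
    have "G * norm (\<theta>2 - \<theta>1) \<le> G * (real \<sigma>' * (\<eta>w * G))"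
      unfolding \<theta>1_def \<theta>2_def using dist[of \<sigma>'] G_pos by (intro mult_left_mono) auto
    thus ?thesis using sig by (simp add: algebra_simps)
  qed
  have pw: "loss x z \<le> loss y z + G * norm (\<theta>2 - \<theta>1)" if "x \<in> {\<theta>1, \<theta>2}" "y \<in> {\<theta>1, \<theta>2}" for x y z
  proof -
    have "dist (loss x z) (loss y z) \<le> G * dist x y"
      using lipschitz_onD[OF loss_lipschitz[rule_format, of z]] that m1 by auto
    moreover have "dist x y \<le> norm (\<theta>2 - \<theta>1)" using that by (auto simp: dist_norm norm_minus_commute)
    ultimately have "dist (loss x z) (loss y z) \<le> G * norm (\<theta>2 - \<theta>1)"
      using G_pos by (meson mult_left_mono less_imp_le order_trans)
    thus ?thesis by (simp add: dist_real_def)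
  qed
  have Rc: "?R i x \<le> ?R i y + 0.1 * lam" if "i \<in> {1..K}" "x \<in> {\<theta>1, \<theta>2}" "y \<in> {\<theta>1, \<theta>2}" for i x y
  proof -
    have "?R i x \<le> ?R i y + G * norm (\<theta>2 - \<theta>1)"
      unfolding risk_def
      apply (rule int_le_shift)
      using P_prob loss_meas loss_range pw that m1 by auto
    thus ?thesis using dd by linarith
  qed
  have dom: "S \<noteq> {}" "S \<subseteq> {1..K}" "\<And>j. j \<in> {1..K} - S \<Longrightarrow> Min ((\<lambda>i. ?R i \<theta>1) ` S) \<ge> ?R j \<theta>1 + 0.4 * lam"
    using S_dom unfolding dominant_def \<theta>1_def by auto
  have fin: "finite S" using dom(2) finite_subset by blast
  show ?thesis
    unfolding dominant_def \<theta>2_def[symmetric]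
  proof (intro conjI ballI dom(1,2))
    fix j assume j: "j \<in> {1..K} - S"
    show "Min ((\<lambda>i. ?R i \<theta>2) ` S) \<ge> ?R j \<theta>2 + 0.2 * lam"
    proof (subst Min_ge_iff)
      show "finite ((\<lambda>i. ?R i \<theta>2) ` S)" using fin by simp
      show "(\<lambda>i. ?R i \<theta>2) ` S \<noteq> {}" using dom(1) by simp
      show "\<forall>a\<in>(\<lambda>i. ?R i \<theta>2) ` S. ?R j \<theta>2 + 0.2 * lam \<le> a"
      proof
        fix a assume "a \<in> (\<lambda>i. ?R i \<theta>2) ` S"
        then obtain i where i: "i \<in> S" "a = ?R i \<theta>2" by auto
        have "Min ((\<lambda>i. ?R i \<theta>1) ` S) \<le> ?R i \<theta>1" using fin i by simp
        moreover have "?R i \<theta>1 \<le> ?R i \<theta>2 + 0.1 * lam" using Rc[of i \<theta>1 \<theta>2] i dom(2) by auto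
        moreover have "?R j \<theta>2 \<le> ?R j \<theta>1 + 0.1 * lam" using Rc[of j \<theta>2 \<theta>1] j by auto
        ultimately show "?R j \<theta>2 + 0.2 * lam \<le> a" using dom(3)[OF j] i by linarith
      qed
    qed
  qed
qed

end
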